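(* Let $A=\{0,1,2\}$ and let $T\colon A^4\to A$ be given by $T(1,1,2,2)=T(1,2,1,2)=1$ and $T(\mathbf{x})=0$ for all other $\mathbf{x}\in A^4$. For $a\in A$ let $z_a\colon A^2\to A$ be given by $z_a(2,2)=a$ and $z_a(x,y)=0$ otherwise, and for $a,b,c,d,e\in A$ let $f_{a,(b,c,d,e)}\colon A^2\to A$ be given by $f(0,2)=b$, $f(1,2)=c$, $f(2,0)=d$, $f(2,1)=e$, $f(2,2)=a$ and $f(x,y)=0$ for $(x,y)\in\{0,1\}^2$. Then $\{T\}^{*(2)}$ consists of exactly the following 65 functions: \[\{T\}^{*(2)}=\{e^2_1,e^2_2\}\ \dot\cup\ \{z_a : a\in\{0,1,2\}\}\ \dot\cup\ \bigcup_{c\in\{1,2\}}\{f_{a,\mathbf{x}} : a\in\{0,c\},\ \mathbf{x}\in\{0,c\}^4\setminus\{(0,0,0,0)\}\},\] where $e^2_1(x,y)=x$ and $e^2_2(x,y)=y$.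
   Context: An $m$-ary $g$ commutes with an $n$-ary $h$ if $g\bigl((h((x_{ij})_{j}))_{i}\bigr)=h\bigl((g((x_{ij})_{i}))_{j}\bigr)$ for all $(x_{ij})\in A^{m\times n}$. For a set $F$ of finitary operations on $A$, $F^*$ is the set of all finitary operations of positive arity commuting with every member of $F$, and $F^{*(2)}$ is the set of binary members of $F^*$. *)

theory Defs
  imports "HOL-Library.Numeral_Type"
begin

text \<open>The base set A = {0,1,2} is the numeral type 3 (elements 0, 1, 2).
  A finitary operation of arity n is represented as a function on lists, read on
  lists of length n.\<close>

type_synonym A = 3

definition commutes :: "nat \<Rightarrow> (A list \<Rightarrow> A) \<Rightarrow> nat \<Rightarrow> (A list \<Rightarrow> A) \<Rightarrow> bool" where
  "commutes m g n h \<longleftrightarrow>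
     (\<forall>x :: nat \<Rightarrow> nat \<Rightarrow> A.
        g (map (\<lambda>i. h (map (\<lambda>j. x i j) [0..<n])) [0..<m])
      = h (map (\<lambda>j. g (map (\<lambda>i. x i j) [0..<m])) [0..<n]))"

definition bin_op :: "(A \<Rightarrow> A \<Rightarrow> A) \<Rightarrow> (A list \<Rightarrow> A)" where
  "bin_op b = (\<lambda>xs. b (xs ! 0) (xs ! 1))"

definition quat_op :: "(A \<Rightarrow> A \<Rightarrow> A \<Rightarrow> A \<Rightarrow> A) \<Rightarrow> (A list \<Rightarrow> A)" where
  "quat_op q = (\<lambda>xs. q (xs ! 0) (xs ! 1) (xs ! 2) (xs ! 3))"

definition T :: "A \<Rightarrow> A \<Rightarrow> A \<Rightarrow> A \<Rightarrow> A" where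
  "T x1 x2 x3 x4 =
     (if (x1, x2, x3, x4) = (1, 1, 2, 2) \<or> (x1, x2, x3, x4) = (1, 2, 1, 2) then 1 else 0)"

definition T_star2 :: "(A \<Rightarrow> A \<Rightarrow> A) set" where
  "T_star2 = {b. commutes 2 (bin_op b) 4 (quat_op T)}"

definition z :: "A \<Rightarrow> A \<Rightarrow> A \<Rightarrow> A" where
  "z a x y = (if x = 2 \<and> y = 2 then a else 0)"

definition f :: "A \<Rightarrow> A \<Rightarrow> A \<Rightarrow> A \<Rightarrow> A \<Rightarrow> A \<Rightarrow> A \<Rightarrow> A" where
  "f a b c d e x y =
     (if x = 0 \<and> y = 2 then b
      else if x = 1 \<and> y = 2 then c
      else if x = 2 \<and> y = 0 then d
      else if x = 2 \<and> y = 1 then e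
      else if x = 2 \<and> y = 2 then a
      else 0)"

end

theory Submission
  imports Defs
begin
lemma e3: "(x::3) = 0 \<or> x = 1 \<or> x = 2"
proof (rule bit1_cases[of x])
  fix z assume 1: "x = of_int z" "0 \<le> z" "z < int CARD(1 bit1)"
  have "z = 0 \<or> z = 1 \<or> z = 2" using 1(2,3) by (simp, presburger)
  then show ?thesis using 1 by auto
qed
lemma cases3: "((x::3) = 0 \<Longrightarrow> P) \<Longrightarrow> (x = 1 \<Longrightarrow> P) \<Longrightarrow> (x = 2 \<Longrightarrow> P) \<Longrightarrow> P"
  using e3 by blast
lemma all3: "(\<forall>x::3. P x) \<longleftrightarrow> P 0 \<and> P 1 \<and> P 2" using e3 by metis

definition C where "C b \<longleftrightarrow> (\<forall>x1 x2 x3 x4 y1 y2 y3 y4. b (T x1 x2 x3 x4) (T y1 y2 y3 y4) = T (b x1 y1) (b x2 y2) (b x3 y3) (b x4 y4))"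
lemma comm_iff: "commutes 2 (bin_op b) 4 (quat_op T) \<longleftrightarrow> C b"
proof
  assume h: "commutes 2 (bin_op b) 4 (quat_op T)"
  show "C b" unfolding C_def
  proof (intro allI)
    fix x1 x2 x3 x4 y1 y2 y3 y4
    have "\<And>x :: nat \<Rightarrow> nat \<Rightarrow> A. b (T (x 0 0) (x 0 1) (x 0 2) (x 0 3)) (T (x 1 0) (x 1 1) (x 1 2) (x 1 3)) = T (b (x 0 0) (x 1 0)) (b (x 0 1) (x 1 1)) (b (x 0 2) (x 1 2)) (b (x 0 3) (x 1 3))"
      using h by (simp add: commutes_def bin_op_def quat_op_def upt_rec numeral_2_eq_2 numeral_3_eq_3)
    from this[of "\<lambda>i j. if i = 0 then [x1,x2,x3,x4]!j else [y1,y2,y3,y4]!j"]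
    show "b (T x1 x2 x3 x4) (T y1 y2 y3 y4) = T (b x1 y1) (b x2 y2) (b x3 y3) (b x4 y4)" by simp
  qed
next
  assume "C b" then show "commutes 2 (bin_op b) 4 (quat_op T)"
    by (simp add: C_def commutes_def bin_op_def quat_op_def upt_rec numeral_2_eq_2 numeral_3_eq_3)
qed

lemma hardv:
  fixes vaa vab vac vba vbb vbc vca vcb vcc :: A
  shows "((vaa = T vaa vaa vaa vaa) \<and> (vab = T vbb vac vbb vac) \<and> (vba = T vbb vbb vca vca) \<and> (vbb = T vbb vbc vcb vcc) \<and> (vba = T vbc vbc vcb vcb) \<and> (vab = T vcb vbc vcb vbc) \<and> (vaa = T vac vac vca vca) \<and> (vaa = T vca vac vca vac) \<and> (vaa = T vac vac vcc vcc) \<and> (vaa = T vcc vac vcc vac) \<and> (vba = T vbc vbc vca vca) \<and> (vaa = T vca vbc vca vbc) \<and> (vab = T vcb vcb vcc vcc) \<and> (vaa = T vcc vcb vcc vcb) \<and> (vaa = T vac vac vbc vbc) \<and> (vaa = T vbc vac vbc vac) \<and> (vaa = T vca vca vcb vcb) \<and> (vaa = T vcb vca vcb vca) \<and> (vba = T vbc vbc vcc vcc) \<and> (vaa = T vcc vbc vcc vbc) \<and> (vaa = T vac vac vcb vcb) \<and> (vab = T vcb vac vcb vac) \<and> (vaa = T vca vca vcc vcc) \<and> (vaa = T vcc vca vcc vca)) \<longrightarrow>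
   (vaa = 0 \<and> vab = 0 \<and> vac = 0 \<and> vba = 1 \<and> vbb = 1 \<and> vbc = 1 \<and> vca = 2 \<and> vcb = 2 \<and> vcc = 2) \<or> (vaa = 0 \<and> vab = 1 \<and> vac = 2 \<and> vba = 0 \<and> vbb = 1 \<and> vbc = 2 \<and> vca = 0 \<and> vcb = 1 \<and> vcc = 2) \<or> (vaa = 0 \<and> vab = 0 \<and> vba = 0 \<and> vbb = 0 \<and> (vac = 0 \<or> vac = 1) \<and> (vbc = 0 \<or> vbc = 1) \<and> (vca = 0 \<or> vca = 1) \<and> (vcb = 0 \<or> vcb = 1) \<and> (vcc = 0 \<or> vcc = 1)) \<or> (vaa = 0 \<and> vab = 0 \<and> vba = 0 \<and> vbb = 0 \<and> (vac = 0 \<or> vac = 2) \<and> (vbc = 0 \<or> vbc = 2) \<and> (vca = 0 \<or> vca = 2) \<and> (vcb = 0 \<or> vcb = 2) \<and> (vcc = 0 \<or> vcc = 2))"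
  by (cases vaa rule: cases3; (simp add: T_def)?; cases vcb rule: cases3; (simp add: T_def)?; cases vbc rule: cases3; (simp add: T_def)?; cases vba rule: cases3; (simp add: T_def)?; cases vcc rule: cases3; (simp add: T_def)?; cases vbb rule: cases3; (simp add: T_def)?; cases vab rule: cases3; (simp add: T_def)?; cases vac rule: cases3; (simp add: T_def)?; cases vca rule: cases3; (simp add: T_def)?)

definition Zc :: "A \<Rightarrow> (A \<Rightarrow> A \<Rightarrow> A) \<Rightarrow> bool" where
  "Zc c h \<longleftrightarrow> h 0 0 = 0 \<and> h 0 1 = 0 \<and> h 1 0 = 0 \<and> h 1 1 = 0 \<and> (\<forall>x y. h x y = 0 \<or> h x y = c)"

lemma hard:
  assumes "C b"
  shows "b = (\<lambda>x y. x) \<or> b = (\<lambda>x y. y) \<or> Zc 1 b \<or> Zc 2 b"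
proof -
have c1: "b 0 0 = T (b 0 0) (b 0 0) (b 0 0) (b 0 0)" using assms[unfolded C_def, rule_format, of 0 0 0 0 0 0 0 0] by (simp add: T_def)
have c2: "b 0 1 = T (b 1 1) (b 0 2) (b 1 1) (b 0 2)" using assms[unfolded C_def, rule_format, of 1 0 1 0 1 2 1 2] by (simp add: T_def)
have c3: "b 1 0 = T (b 1 1) (b 1 1) (b 2 0) (b 2 0)" using assms[unfolded C_def, rule_format, of 1 1 2 2 1 1 0 0] by (simp add: T_def)
have c4: "b 1 1 = T (b 1 1) (b 1 2) (b 2 1) (b 2 2)" using assms[unfolded C_def, rule_format, of 1 1 2 2 1 2 1 2] by (simp add: T_def)
have c5: "b 1 0 = T (b 1 2) (b 1 2) (b 2 1) (b 2 1)" using assms[unfolded C_def, rule_format, of 1 1 2 2 2 2 1 1] by (simp add: T_def)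
have c6: "b 0 1 = T (b 2 1) (b 1 2) (b 2 1) (b 1 2)" using assms[unfolded C_def, rule_format, of 2 1 2 1 1 2 1 2] by (simp add: T_def)
have c7: "b 0 0 = T (b 0 2) (b 0 2) (b 2 0) (b 2 0)" using assms[unfolded C_def, rule_format, of 0 0 2 2 2 2 0 0] by (simp add: T_def)
have c8: "b 0 0 = T (b 2 0) (b 0 2) (b 2 0) (b 0 2)" using assms[unfolded C_def, rule_format, of 2 0 2 0 0 2 0 2] by (simp add: T_def)
have c9: "b 0 0 = T (b 0 2) (b 0 2) (b 2 2) (b 2 2)" using assms[unfolded C_def, rule_format, of 0 0 2 2 2 2 2 2] by (simp add: T_def)
have c10: "b 0 0 = T (b 2 2) (b 0 2) (b 2 2) (b 0 2)" using assms[unfolded C_def, rule_format, of 2 0 2 0 2 2 2 2] by (simp add: T_def)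
have c11: "b 1 0 = T (b 1 2) (b 1 2) (b 2 0) (b 2 0)" using assms[unfolded C_def, rule_format, of 1 1 2 2 2 2 0 0] by (simp add: T_def)
have c12: "b 0 0 = T (b 2 0) (b 1 2) (b 2 0) (b 1 2)" using assms[unfolded C_def, rule_format, of 2 1 2 1 0 2 0 2] by (simp add: T_def)
have c13: "b 0 1 = T (b 2 1) (b 2 1) (b 2 2) (b 2 2)" using assms[unfolded C_def, rule_format, of 2 2 2 2 1 1 2 2] by (simp add: T_def)
have c14: "b 0 0 = T (b 2 2) (b 2 1) (b 2 2) (b 2 1)" using assms[unfolded C_def, rule_format, of 2 2 2 2 2 1 2 1] by (simp add: T_def)
have c15: "b 0 0 = T (b 0 2) (b 0 2) (b 1 2) (b 1 2)" using assms[unfolded C_def, rule_format, of 0 0 1 1 2 2 2 2] by (simp add: T_def)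
have c16: "b 0 0 = T (b 1 2) (b 0 2) (b 1 2) (b 0 2)" using assms[unfolded C_def, rule_format, of 1 0 1 0 2 2 2 2] by (simp add: T_def)
have c17: "b 0 0 = T (b 2 0) (b 2 0) (b 2 1) (b 2 1)" using assms[unfolded C_def, rule_format, of 2 2 2 2 0 0 1 1] by (simp add: T_def)
have c18: "b 0 0 = T (b 2 1) (b 2 0) (b 2 1) (b 2 0)" using assms[unfolded C_def, rule_format, of 2 2 2 2 1 0 1 0] by (simp add: T_def)
have c19: "b 1 0 = T (b 1 2) (b 1 2) (b 2 2) (b 2 2)" using assms[unfolded C_def, rule_format, of 1 1 2 2 2 2 2 2] by (simp add: T_def)
have c20: "b 0 0 = T (b 2 2) (b 1 2) (b 2 2) (b 1 2)" using assms[unfolded C_def, rule_format, of 2 1 2 1 2 2 2 2] by (simp add: T_def)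
have c21: "b 0 0 = T (b 0 2) (b 0 2) (b 2 1) (b 2 1)" using assms[unfolded C_def, rule_format, of 0 0 2 2 2 2 1 1] by (simp add: T_def)
have c22: "b 0 1 = T (b 2 1) (b 0 2) (b 2 1) (b 0 2)" using assms[unfolded C_def, rule_format, of 2 0 2 0 1 2 1 2] by (simp add: T_def)
have c23: "b 0 0 = T (b 2 0) (b 2 0) (b 2 2) (b 2 2)" using assms[unfolded C_def, rule_format, of 2 2 2 2 0 0 2 2] by (simp add: T_def)
have c24: "b 0 0 = T (b 2 2) (b 2 0) (b 2 2) (b 2 0)" using assms[unfolded C_def, rule_format, of 2 2 2 2 2 0 2 0] by (simp add: T_def)
  have V: "(b 0 0 = 0 \<and> b 0 1 = 0 \<and> b 0 2 = 0 \<and> b 1 0 = 1 \<and> b 1 1 = 1 \<and> b 1 2 = 1 \<and> b 2 0 = 2 \<and> b 2 1 = 2 \<and> b 2 2 = 2) \<or> (b 0 0 = 0 \<and> b 0 1 = 1 \<and> b 0 2 = 2 \<and> b 1 0 = 0 \<and> b 1 1 = 1 \<and> b 1 2 = 2 \<and> b 2 0 = 0 \<and> b 2 1 = 1 \<and> b 2 2 = 2) \<or> (b 0 0 = 0 \<and> b 0 1 = 0 \<and> b 1 0 = 0 \<and> b 1 1 = 0 \<and> (b 0 2 = 0 \<or> b 0 2 = 1) \<and> (b 1 2 = 0 \<or> b 1 2 = 1) \<and> (b 2 0 = 0 \<or> b 2 0 = 1) \<and> (b 2 1 = 0 \<or> b 2 1 = 1) \<and> (b 2 2 = 0 \<or>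 b 2 2 = 1)) \<or> (b 0 0 = 0 \<and> b 0 1 = 0 \<and> b 1 0 = 0 \<and> b 1 1 = 0 \<and> (b 0 2 = 0 \<or> b 0 2 = 2) \<and> (b 1 2 = 0 \<or> b 1 2 = 2) \<and> (b 2 0 = 0 \<or> b 2 0 = 2) \<and> (b 2 1 = 0 \<or> b 2 1 = 2) \<and> (b 2 2 = 0 \<or> b 2 2 = 2))"
    by (rule mp[OF hardv[where vaa="b 0 0" and vab="b 0 1" and vac="b 0 2" and vba="b 1 0" and vbb="b 1 1" and vbc="b 1 2" and vca="b 2 0" and vcb="b 2 1" and vcc="b 2 2"]]) (intro conjI c1 c2 c3 c4 c5 c6 c7 c8 c9 c10 c11 c12 c13 c14 c15 c16 c17 c18 c19 c20 c21 c22 c23 c24)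
  then show ?thesis
  proof (elim disjE)
    assume "b 0 0 = 0 \<and> b 0 1 = 0 \<and> b 0 2 = 0 \<and> b 1 0 = 1 \<and> b 1 1 = 1 \<and> b 1 2 = 1 \<and> b 2 0 = 2 \<and> b 2 1 = 2 \<and> b 2 2 = 2"
    then have "b = (\<lambda>x y. x)" unfolding fun_eq_iff all3 by simp
    then show ?thesis by blast
  next
    assume "b 0 0 = 0 \<and> b 0 1 = 1 \<and> b 0 2 = 2 \<and> b 1 0 = 0 \<and> b 1 1 = 1 \<and> b 1 2 = 2 \<and> b 2 0 = 0 \<and> b 2 1 = 1 \<and> b 2 2 = 2"
    then have "b = (\<lambda>x y. y)" unfolding fun_eq_iff all3 by simp
    then show ?thesis by blast
  next
    assume "b 0 0 = 0 \<and> b 0 1 = 0 \<and> b 1 0 = 0 \<and> b 1 1 = 0 \<and> (b 0 2 = 0 \<or> b 0 2 = 1) \<and> (b 1 2 = 0 \<or> b 1 2 = 1) \<and> (b 2 0 = 0 \<or> b 2 0 = 1) \<and> (b 2 1 = 0 \<or> b 2 1 = 1) \<and> (b 2 2 = 0 \<or> b 2 2 = 1)"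
    then have "Zc 1 b" unfolding Zc_def all3 by simp
    then show ?thesis by blast
  next
    assume "b 0 0 = 0 \<and> b 0 1 = 0 \<and> b 1 0 = 0 \<and> b 1 1 = 0 \<and> (b 0 2 = 0 \<or> b 0 2 = 2) \<and> (b 1 2 = 0 \<or> b 1 2 = 2) \<and> (b 2 0 = 0 \<or> b 2 0 = 2) \<and> (b 2 1 = 0 \<or> b 2 1 = 2) \<and> (b 2 2 = 0 \<or> b 2 2 = 2)"
    then have "Zc 2 b" unfolding Zc_def all3 by simp
    then show ?thesis by blast
  qed
qed

lemma T01: "T x1 x2 x3 x4 = 0 \<or> T x1 x2 x3 x4 = 1" by (simp add: T_def)
lemma T1: "T x1 x2 x3 x4 = 1 \<Longrightarrow> x1 = 1 \<and> x4 = 2" by (auto simp: T_def split: if_splits)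

lemma easy:
  assumes "b = (\<lambda>x y. x) \<or> b = (\<lambda>x y. y) \<or> Zc 1 b \<or> Zc 2 b"
  shows "C b"
proof (cases "Zc 1 b \<or> Zc 2 b")
  case True
  then obtain c where c: "c = 1 \<or> c = 2" and Zb: "Zc c b" by blast
  show "C b" unfolding C_def
  proof (intro allI)
    fix x1 x2 x3 x4 y1 y2 y3 y4
    have L: "b (T x1 x2 x3 x4) (T y1 y2 y3 y4) = 0"
      using T01[of x1 x2 x3 x4] T01[of y1 y2 y3 y4] Zb unfolding Zc_def by auto
    have R: "T (b x1 y1) (b x2 y2) (b x3 y3) (b x4 y4) = 0"
    proof (rule ccontr)
      assume "T (b x1 y1) (b x2 y2) (b x3 y3) (b x4 y4) \<noteq> 0"
      then have "b x1 y1 = 1 \<and> b x4 y4 = 2" using T1 T01 by metis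
      moreover have "b x1 y1 = 0 \<or> b x1 y1 = c" "b x4 y4 = 0 \<or> b x4 y4 = c" using Zb unfolding Zc_def by auto
      ultimately show False using c by auto
    qed
    show "b (T x1 x2 x3 x4) (T y1 y2 y3 y4) = T (b x1 y1) (b x2 y2) (b x3 y3) (b x4 y4)"
      using L R by simp
  qed
next
  case False
  then have "b = (\<lambda>x y. x) \<or> b = (\<lambda>x y. y)" using assms by blast
  then show ?thesis by (auto simp: C_def)
qed

lemma char: "T_star2 = {h. h = (\<lambda>x y. x) \<or> h = (\<lambda>x y. y) \<or> Zc 1 h \<or> Zc 2 h}"
  unfolding T_star2_def comm_iff using hard easy by blast

lemma Zc_f: "Zc c h \<Longrightarrow> h = f (h 2 2) (h 0 2) (h 1 2) (h 2 0) (h 2 1)"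
  unfolding Zc_def fun_eq_iff all3 f_def by simp

lemma f_z: "f a 0 0 0 0 = z a"
  unfolding fun_eq_iff all3 f_def z_def by simp

lemma f_Zc: "a \<in> {0,c} \<Longrightarrow> b \<in> {0,c} \<Longrightarrow> c' \<in> {0,c} \<Longrightarrow> d \<in> {0,c} \<Longrightarrow> e \<in> {0,c} \<Longrightarrow> Zc c (f a b c' d e)"
  unfolding Zc_def all3 f_def by auto


lemma Zc_vals: "Zc c h \<Longrightarrow> h x y \<in> {0, c}"
  unfolding Zc_def by auto

lemma rhs: "{(\<lambda>x y. x), (\<lambda>x y. y)}
         \<union> {z a | a. a \<in> {0, 1, 2}}
         \<union> (\<Union>c\<in>{1, 2}. {f a b c' d e | a b c' d e.
               a \<in> {0, c} \<and> b \<in> {0, c} \<and> c' \<in> {0, c} \<and> d \<in> {0, c} \<and> e \<in> {0, c}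
               \<and> (b, c', d, e) \<noteq> (0, 0, 0, 0)})
   = {h. h = (\<lambda>x y. x) \<or> h = (\<lambda>x y. y) \<or> Zc 1 h \<or> Zc 2 h}" (is "?P \<union> ?Zs \<union> ?U = ?R")
proof (rule set_eqI, rule iffI)
  fix h assume "h \<in> ?P \<union> ?Zs \<union> ?U"
  then consider (A) "h \<in> ?P" | (B) "h \<in> ?Zs" | (C) "h \<in> ?U" by (elim UnE) auto
  then show "h \<in> ?R"
  proof cases
    case A then show ?thesis by blast
  next
    case B
    then obtain a where ha: "h = z a" "a \<in> {0,1,2}" by auto
    then have "a \<in> {0,1} \<or> a \<in> {0,2}" by auto
    then have "Zc 1 (f a 0 0 0 0) \<or> Zc 2 (f a 0 0 0 0)" using f_Zc[of a 1 0 0 0 0] f_Zc[of a 2 0 0 0 0] by auto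
    then show ?thesis using ha f_z by simp
  next
    case C
    then obtain c where c: "c \<in> {1,2}" and hc: "h \<in> {f a b c' d e | a b c' d e.
               a \<in> {0, c} \<and> b \<in> {0, c} \<and> c' \<in> {0, c} \<and> d \<in> {0, c} \<and> e \<in> {0, c}
               \<and> (b, c', d, e) \<noteq> (0, 0, 0, 0)}" by (elim UN_E) auto
    then obtain a b c' d e where "h = f a b c' d e" "a \<in> {0, c}" "b \<in> {0, c}" "c' \<in> {0, c}" "d \<in> {0, c}" "e \<in> {0, c}"
      by auto
    then have "Zc c h" using f_Zc by simp
    then show ?thesis using c by auto
  qed
next
  fix h assume "h \<in> ?R"
  then have "h = (\<lambda>x y. x) \<or> h = (\<lambda>x y. y) \<or> Zc 1 h \<or> Zc 2 h" by simp
  then consider (A) "h = (\<lambda>x y. x) \<or> h = (\<lambda>x y. y)" | (B) c where "c \<in> {1,2}" "Zc c h" by auto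
  then show "h \<in> ?P \<union> ?Zs \<union> ?U"
  proof cases
    case A then show ?thesis by blast
  next
    case (B c)
    have hf: "h = f (h 2 2) (h 0 2) (h 1 2) (h 2 0) (h 2 1)" using Zc_f[OF B(2)] .
    have vals: "h 2 2 \<in> {0,c}" "h 0 2 \<in> {0,c}" "h 1 2 \<in> {0,c}" "h 2 0 \<in> {0,c}" "h 2 1 \<in> {0,c}"
      using Zc_vals[OF B(2)] by auto
    show ?thesis
    proof (cases "(h 0 2, h 1 2, h 2 0, h 2 1) = (0, 0, 0, 0)")
      case True
      then have "h = z (h 2 2)" using hf f_z by simp
      moreover have "h 2 2 \<in> {0,1,2}" using e3 by simp
      ultimately have "h \<in> ?Zs" by auto
      then show ?thesis by (rule UnI1[OF UnI2])
    next
      case False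
      have "h \<in> {f a b c' d e | a b c' d e.
               a \<in> {0, c} \<and> b \<in> {0, c} \<and> c' \<in> {0, c} \<and> d \<in> {0, c} \<and> e \<in> {0, c}
               \<and> (b, c', d, e) \<noteq> (0, 0, 0, 0)}"
        apply (rule CollectI)
        apply (rule exI[of _ "h 2 2"], rule exI[of _ "h 0 2"], rule exI[of _ "h 1 2"], rule exI[of _ "h 2 0"], rule exI[of _ "h 2 1"])
        using hf vals False by simp
      then have "h \<in> ?U" using B(1) by (intro UN_I)
      then show ?thesis by (rule UnI2)
    qed
  qed
qed

lemma inj_f: "inj_on (\<lambda>(a, b, c', d, e). f a b c' d e) X"
proof (rule inj_onI)
  fix p q assume "p \<in> X" "q \<in> X" and eq: "(\<lambda>(a, b, c', d, e). f a b c' d e) p = (\<lambda>(a, b, c', d, e). f a b c' d e) q"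
  obtain a b c' d e where p: "p = (a, b, c', d, e)" by (cases p) auto
  obtain a2 b2 c2 d2 e2 where q: "q = (a2, b2, c2, d2, e2)" by (cases q) auto
  have "f a b c' d e = f a2 b2 c2 d2 e2" using eq p q by simp
  then have E: "\<And>x y. f a b c' d e x y = f a2 b2 c2 d2 e2 x y" by simp
  have "a = a2" using E[of 2 2] by (simp add: f_def)
  moreover have "b = b2" using E[of 0 2] by (simp add: f_def)
  moreover have "c' = c2" using E[of 1 2] by (simp add: f_def)
  moreover have "d = d2" using E[of 2 0] by (simp add: f_def)
  moreover have "e = e2" using E[of 2 1] by (simp add: f_def)
  ultimately show "p = q" unfolding p q by simp
qed

lemma Zc_img: "{h. Zc c h} = (\<lambda>(a, b, c', d, e). f a b c' d e) ` ({0,c} \<times> {0,c} \<times> {0,c} \<times> {0,c} \<times> {0,c})"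
proof (rule set_eqI, rule iffI)
  fix h assume "h \<in> {h. Zc c h}"
  then have Z: "Zc c h" by simp
  have "h = (\<lambda>(a, b, c', d, e). f a b c' d e) (h 2 2, h 0 2, h 1 2, h 2 0, h 2 1)"
    by (simp only: prod.case) (rule Zc_f[OF Z])
  moreover have "(h 2 2, h 0 2, h 1 2, h 2 0, h 2 1) \<in> {0,c} \<times> {0,c} \<times> {0,c} \<times> {0,c} \<times> {0,c}"
    by (intro SigmaI Zc_vals[OF Z])
  ultimately show "h \<in> (\<lambda>(a, b, c', d, e). f a b c' d e) ` ({0,c} \<times> {0,c} \<times> {0,c} \<times> {0,c} \<times> {0,c})"
    by blast
next
  fix h assume "h \<in> (\<lambda>(a, b, c', d, e). f a b c' d e) ` ({0,c} \<times> {0,c} \<times> {0,c} \<times> {0,c} \<times> {0,c})"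
  then obtain p where pP: "p \<in> {0,c} \<times> {0,c} \<times> {0,c} \<times> {0,c} \<times> {0,c}"
    and hp: "h = (\<lambda>(a, b, c', d, e). f a b c' d e) p" by (rule imageE)
  obtain a b c' d e where p: "p = (a, b, c', d, e)" by (cases p) auto
  have m: "a \<in> {0,c}" "b \<in> {0,c}" "c' \<in> {0,c}" "d \<in> {0,c}" "e \<in> {0,c}"
    using pP unfolding p by (simp_all only: mem_Sigma_iff)
  have "Zc c (f a b c' d e)" using m by (rule f_Zc)
  then show "h \<in> {h. Zc c h}" using hp p by simp
qed

lemma card_Zc: "c \<noteq> 0 \<Longrightarrow> card {h. Zc c h} = 32"
proof -
  assume c: "c \<noteq> 0"
  have two: "card {0, c} = 2" using c by simp
  have "card {h. Zc c h} = card ({0,c} \<times> {0,c} \<times> {0,c} \<times> {0,c} \<times> ({0,c} :: A set))"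
    unfolding Zc_img by (rule card_image[OF inj_f])
  also have "\<dots> = 32" by (simp only: card_cartesian_product two)
  finally show ?thesis .
qed

lemma Zc_int: "{h. Zc 1 h} \<inter> {h. Zc 2 h} = {\<lambda>x y. 0}"
proof -
  have "Zc 1 h \<and> Zc 2 h \<longleftrightarrow> h = (\<lambda>x y. 0)" for h
  proof
    assume "Zc 1 h \<and> Zc 2 h"
    then have "\<forall>x y. h x y = 0"
    proof (intro allI)
      fix x y assume H: "Zc 1 h \<and> Zc 2 h"
      have "h x y \<in> {0,1}" "h x y \<in> {0,2}" using Zc_vals H by blast+
      then show "h x y = 0" by auto
    qed
    then show "h = (\<lambda>x y. 0)" by auto
  qed (simp add: Zc_def)
  then show ?thesis by auto
qed

lemma card_char: "card {h :: A \<Rightarrow> A \<Rightarrow> A. h = (\<lambda>x y. x) \<or> h = (\<lambda>x y. y) \<or> Zc 1 h \<or> Zc 2 h} = 65"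
proof -
  let ?P = "{(\<lambda>x y. x), (\<lambda>x y. y)} :: (A \<Rightarrow> A \<Rightarrow> A) set"
  let ?Z = "{h. Zc 1 h} \<union> {h. Zc 2 h}"
  have eq: "{h :: A \<Rightarrow> A \<Rightarrow> A. h = (\<lambda>x y. x) \<or> h = (\<lambda>x y. y) \<or> Zc 1 h \<or> Zc 2 h} = ?P \<union> ?Z" by auto
  have ne: "(\<lambda>x y. x) \<noteq> ((\<lambda>x y. y) :: A \<Rightarrow> A \<Rightarrow> A)"
  proof
    assume "(\<lambda>x y. x) = ((\<lambda>x y. y) :: A \<Rightarrow> A \<Rightarrow> A)"
    then have "(\<lambda>x y. x) (0::A) (1::A) = (\<lambda>x y. y) (0::A) (1::A)" by metis
    then show False by simp
  qed
  have cP: "card ?P = 2" using ne by simp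
  have disj: "?P \<inter> ?Z = {}" by (auto simp: Zc_def)
  have "card ?Z + card ({h. Zc 1 h} \<inter> {h. Zc 2 h}) = card {h. Zc 1 h} + card {h. Zc 2 h}"
    by (rule card_Un_Int[symmetric]) simp_all
  then have cZ: "card ?Z = 63" using card_Zc[of 1] card_Zc[of 2] Zc_int by simp
  show ?thesis unfolding eq by (subst card_Un_disjoint) (use disj cP cZ in simp_all)
qed

theorem lemma3p4:
  shows "T_star2 =
           {(\<lambda>x y. x), (\<lambda>x y. y)}
         \<union> {z a | a. a \<in> {0, 1, 2}}
         \<union> (\<Union>c\<in>{1, 2}. {f a b c' d e | a b c' d e.
               a \<in> {0, c} \<and> b \<in> {0, c} \<and> c' \<in> {0, c} \<and> d \<in> {0, c} \<and> e \<in> {0, c}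
               \<and> (b, c', d, e) \<noteq> (0, 0, 0, 0)})
       \<and> card T_star2 = 65"
proof (rule conjI)
  show "card T_star2 = 65" by (simp only: char card_char)
qed (simp only: char rhs)

end
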